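(* For $t>0$ and $\alpha>0$ define \[ f_{t,\alpha}(z) \coloneqq \frac{e^{-t/(z+1)}}{(z+1)^{\alpha}},\qquad z\in\mathbb{C}_+ , \] where $(z+1)^{\alpha}$ denotes the principal branch. Then $f_{t,\alpha}\in\mathcal{B}$ for all $t,\alpha>0$. Moreover, for each fixed $\alpha>0$ there exist constants $M>0$ and $t_0>0$ such that \[ \|f_{t,\alpha}\|_{\mathcal{B}_0}\le \frac{M}{t^{\alpha/2}}\qquad\text{for all } t\ge t_0 . \]
   Context: $\mathbb{C}_+=\{\lambda\in\mathbb{C}:\operatorname{Re}\lambda>0\}$. $\mathcal{B}$ denotes the space of all holomorphic functions $f$ on $\mathbb{C}_+$ such that \[ \|f\|_{\mathcal{B}_0}\coloneqq\int_0^\infty \sup_{\eta\in\mathbb{R}}|f'(\xi+i\eta)|\,d\xi<\infty . \] *)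

theory Defs
  imports "HOL-Complex_Analysis.Complex_Analysis"
begin

definition right_half_plane :: "complex set" where
  "right_half_plane = {z. Re z > 0}"

definition B0_norm :: "(complex \<Rightarrow> complex) \<Rightarrow> ennreal" where
  "B0_norm f = (\<integral>\<^sup>+ \<xi> \<in> {0<..}. (SUP \<eta>. ennreal (cmod (deriv f (Complex \<xi> \<eta>)))) \<partial>lborel)"

definition B_space :: "(complex \<Rightarrow> complex) set" where
  "B_space = {f. f holomorphic_on right_half_plane \<and> B0_norm f < \<infinity>}"

text \<open>f_{t,alpha}(z) = exp(-t/(z+1)) / (z+1)^alpha, principal branch (complex powr uses Ln).\<close>
definition f_ta :: "real \<Rightarrow> real \<Rightarrow> complex \<Rightarrow> complex" where
  "f_ta t \<alpha> z = exp (- of_real t / (z + 1)) / (z + 1) powr (of_real \<alpha>)"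

end

theory Submission
  imports Defs "HOL-Real_Asymp.Real_Asymp"
begin


lemma expb: assumes "k > 0" "v > (0::real)" shows "exp (-v) \<le> k powr k * v powr (-k)"
proof -
  have "v / k \<le> exp (v/k)" using exp_ge_add_one_self[of "v/k"] by linarith
  hence "(v/k) powr k \<le> exp (v/k) powr k" using assms by (intro powr_mono2) auto
  also have "exp (v/k) powr k = exp v" using assms by (simp add: powr_def)
  finally have "v powr k / k powr k \<le> exp v" using assms by (simp add: powr_divide)
  hence "v powr k \<le> exp v * k powr k" using assms by (simp add: divide_le_eq)
  hence "1 / exp v \<le> k powr k / v powr k" using assms by (simp add: field_simps)
  thus ?thesis by (simp add: exp_minus powr_minus field_simps)
qed

lemma rpow_id: assumes "t > 0" "x > 0" "r > (0::real)" "k > 0"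
  shows "(t*x/r^2) powr (-k) = t powr (-k) * x powr (-k) * r powr (2*k)"
proof -
  have "r^2 = r powr 2" using assms by (simp add: powr_realpow)
  then have "(r^2) powr k = r powr (2*k)" using assms by (metis powr_powr)
  thus ?thesis using assms by (simp add: powr_minus powr_mult powr_divide field_simps)
qed

definition Cc :: "real \<Rightarrow> real" where
  "Cc a = (a/2+1) powr (a/2+1) + a * (a/2) powr (a/2)"

lemma real_bound:
  assumes t: "t > 0" and a: "a > 0" and x: "x \<ge> 1" and r: "r \<ge> x"
  shows "exp (-t*x/r^2) / r powr a * ((t + a*r)/r^2) \<le> Cc a * t powr (-a/2) * x powr (-(a/2+1))"
proof -
  define v where "v = t*x/r^2"
  have x0: "x > 0" and r0: "r > 0" using x r by auto
  have v0: "v > 0" unfolding v_def using t x0 r0 by simp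
  define k where "k = a/2+1"
  define j where "j = a/2"
  have k0: "k > 0" and j0: "j > 0" using a by (auto simp: k_def j_def)
  have r2: "r^2 = r powr 2" using r0 by (simp add: powr_realpow)
  have "exp (-v) / r powr a * (t/r^2) \<le> k powr k * v powr (-k) / r powr a * (t/r^2)"
    using expb[OF k0 v0] t r0 by (intro mult_right_mono divide_right_mono) auto
  also have "\<dots> = k powr k * t powr (-a/2) * x powr (-(a/2+1))"
  proof -
    have h1: "t powr ((a+2)/2) = t * t powr (a/2)" using t by (simp add: add_divide_distrib powr_add)
    have h2: "r powr ((4+a*2)/2) = r powr a * r^2" proof -
      have e: "(4+a*2)/2 = a + 2" by simp
      show ?thesis using r0 unfolding e by (simp add: powr_add)
    qed
    show ?thesis unfolding v_def rpow_id[OF t x0 r0 k0]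
    using t x0 r0 h1 h2 by (simp add: k_def field_simps powr_minus)
  qed
  finally have T1: "exp (-v) / r powr a * (t/r^2) \<le> k powr k * t powr (-a/2) * x powr (-(a/2+1))" .
  have "exp (-v) / r powr a * (a*r/r^2) \<le> j powr j * v powr (-j) / r powr a * (a/r)"
    using expb[OF j0 v0] a r0 by (simp add: power2_eq_square) (intro mult_right_mono divide_right_mono, auto)
  also have "\<dots> = a * j powr j * t powr (-a/2) * x powr (-a/2) / r"
    unfolding v_def rpow_id[OF t x0 r0 j0]
    using t x0 r0 by (simp add: j_def field_simps powr_add powr_diff powr_minus)
  also have "\<dots> \<le> a * j powr j * t powr (-a/2) * x powr (-a/2) / x"
    using x0 r a by (intro divide_left_mono mult_nonneg_nonneg) auto
  also have "\<dots> = a * j powr j * t powr (-a/2) * x powr (-(a/2+1))"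
  proof -
    have "x powr ((a+2)/2) = x * x powr (a/2)" using x0 by (simp add: add_divide_distrib powr_add)
    thus ?thesis using x0 by (simp add: powr_minus field_simps)
  qed
  finally have T2: "exp (-v) / r powr a * (a*r/r^2) \<le> a * j powr j * t powr (-a/2) * x powr (-(a/2+1))" .
  have "exp (-t*x/r^2) / r powr a * ((t + a*r)/r^2) = exp (-v) / r powr a * (t/r^2) + exp (-v) / r powr a * (a*r/r^2)"
    by (simp add: v_def add_divide_distrib distrib_left)
  also have "\<dots> \<le> Cc a * t powr (-a/2) * x powr (-(a/2+1))"
    using T1 T2 by (simp add: Cc_def k_def j_def algebra_simps)
  finally show ?thesis .
qed

lemma has_integral_shift_powr:
  fixes e :: real
  assumes "e < -1"
  shows "((\<lambda>x. (x+1) powr e) has_integral -1 / (e+1)) {0..}"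
proof (intro has_integral_to_inf integrable_continuous_interval continuous_intros)
  define F where "F \<equiv> \<lambda>x. (x+1) powr (e+1) / (e+1)"
  have "((\<lambda>x. (x+1) powr e) has_integral (F y - F 0)) {0..y}" if "y \<ge> 0" for y
    unfolding F_def using assms
    by (intro fundamental_theorem_of_calculus that)
       (auto intro!: derivative_eq_intros
               simp flip: has_real_derivative_iff_has_vector_derivative)
  then have "\<forall>\<^sub>F y in at_top. integral {0..y} (\<lambda>x. (x+1) powr e) = F y - F 0"
    by (meson eventually_at_top_linorderI integral_unique)
  moreover have "((\<lambda>y::real. F y - F 0) \<longlongrightarrow> - F 0) at_top"
    using assms unfolding F_def by real_asymp
  ultimately 
  show "((\<lambda>y. integral {0..y} (\<lambda>x. (x+1) powr e))  \<longlongrightarrow> -1 / (e+1)) at_top"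
    by (simp add: F_def filterlim_cong)
qed (use assms in auto)


lemma alg: "(w::complex) \<noteq> 0 \<Longrightarrow> P \<noteq> 0 \<Longrightarrow>
   (E * (T / w^2) * P - E * (A * (P / w))) / (P * P) = E / P * ((T - A * w) / w^2)"
  by (simp add: field_simps power2_eq_square)

lemma f_deriv:
  fixes t a :: real and z :: complex
  assumes "Re z > -1"
  shows "(f_ta t a has_field_derivative
     (exp (- of_real t / (z + 1)) / (z + 1) powr of_real a * ((of_real t - of_real a * (z+1)) / (z+1)^2))) (at z)"
proof -
  have w: "z + 1 \<notin> \<real>\<^sub>\<le>\<^sub>0" using assms by (auto simp: complex_nonpos_Reals_iff)
  have w0: "z + 1 \<noteq> 0" using assms by (auto simp: complex_eq_iff)
  have p0: "(z+1) powr of_real a \<noteq> 0" using w0 by (simp add: powr_def)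
  have pd: "(z+1) powr (of_real a - 1) = (z+1) powr of_real a / (z+1)"
    using w0 by (simp add: powr_diff)
  have hp: "((\<lambda>z. (z+1) powr of_real a) has_field_derivative (of_real a * (z+1) powr (of_real a - 1))) (at z)"
    proof -
    have "((\<lambda>z. z + 1) has_field_derivative 1) (at z)" by (rule derivative_eq_intros refl)+ simp
    from DERIV_chain2[where g="\<lambda>z. z+1" and x=z, OF has_field_derivative_powr[OF w, of "of_real a"] this]
    show ?thesis by simp
  qed
  have he: "((\<lambda>z. exp (- of_real t / (z + 1))) has_field_derivative exp (- of_real t / (z + 1)) * (of_real t / (z+1)^2)) (at z)"
    by (rule derivative_eq_intros refl | simp add: w0)+ (simp add: field_simps power2_eq_square)
  show ?thesis unfolding f_ta_def[abs_def]
    apply (rule DERIV_divide[OF he hp p0, THEN DERIV_cong])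
    unfolding pd using w0 p0 by (rule alg)
qed

lemma deriv_bound:
  assumes t: "t > 0" and a: "a > 0" and xi: "\<xi> > 0"
  shows "cmod (deriv (f_ta t a) (Complex \<xi> \<eta>)) \<le> Cc a * t powr (-a/2) * (\<xi>+1) powr (-(a/2+1))"
proof -
  define z where "z = Complex \<xi> \<eta>"
  define w where "w = z + 1"
  have Rez: "Re z > -1" using xi by (simp add: z_def)
  have D: "deriv (f_ta t a) z = exp (- of_real t / (z + 1)) / (z + 1) powr of_real a * ((of_real t - of_real a * (z+1)) / (z+1)^2)"
    by (rule DERIV_imp_deriv[OF f_deriv[OF Rez]])
  have Rew: "Re w = \<xi> + 1" by (simp add: w_def z_def)
  define r where "r = cmod w"
  have xr: "\<xi> + 1 \<le> r" unfolding r_def using abs_Re_le_cmod[of w] Rew by linarith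
  have r0: "r > 0" using xr xi by linarith
  have e1: "cmod (exp (- of_real t / w)) = exp (-t*(\<xi>+1)/r^2)"
  proof -
    have "Re (- of_real t / w) = - t * Re w / (cmod w)^2" by (subst Re_divide') simp
    thus ?thesis by (simp add: norm_exp_eq_Re Rew r_def)
  qed
  have e2: "cmod (w powr of_real a) = r powr a"
    by (simp add: norm_powr_real_powr' r_def)
  have e3: "cmod ((of_real t - of_real a * w) / w^2) \<le> (t + a*r)/r^2"
  proof -
    have "cmod (of_real t - of_real a * w) \<le> cmod (of_real t :: complex) + cmod (of_real a * w)"
      by (rule norm_triangle_ineq4)
    also have "\<dots> = t + a * r" using t a by (simp add: norm_mult r_def)
    finally show ?thesis by (simp add: norm_divide norm_power r_def divide_right_mono)
  qed
  have "cmod (deriv (f_ta t a) z) = exp (-t*(\<xi>+1)/r^2) / r powr a * cmod ((of_real t - of_real a * w) / w^2)"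
    unfolding D w_def[symmetric] by (simp only: norm_mult norm_divide e1 e2)
  also have "\<dots> \<le> exp (-t*(\<xi>+1)/r^2) / r powr a * ((t + a*r)/r^2)"
    using e3 by (intro mult_left_mono) auto
  also have "\<dots> \<le> Cc a * t powr (-a/2) * (\<xi>+1) powr (-(a/2+1))"
    using real_bound[OF t a _ xr] xi by simp
  finally show ?thesis by (simp add: z_def)
qed

lemma B0_bound:
  assumes t: "t > 0" and a: "a > 0"
  shows "B0_norm (f_ta t a) \<le> ennreal (Cc a * (2/a) / t powr (a/2))"
proof -
  define K where "K = Cc a * t powr (-a/2)"
  define e where "e = -(a/2+1)"
  have e1: "e < -1" using a by (simp add: e_def)
  have K0: "K \<ge> 0" unfolding K_def Cc_def using a by simp
  have HI: "((\<lambda>x. K * (x+1) powr e) has_integral K * (-1 / (e+1))) {0..}"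
    by (rule has_integral_mult_right[OF has_integral_shift_powr[OF e1]])
  have "B0_norm (f_ta t a) \<le> (\<integral>\<^sup>+ \<xi>. ennreal (K * (\<xi>+1) powr e) * indicator {0..} \<xi> \<partial>lborel)"
    unfolding B0_norm_def
  proof (rule nn_integral_mono)
    fix \<xi> :: real
    show "(SUP \<eta>. ennreal (cmod (deriv (f_ta t a) (Complex \<xi> \<eta>)))) * indicator {0<..} \<xi>
          \<le> ennreal (K * (\<xi>+1) powr e) * indicator {0..} \<xi>"
    proof (cases "\<xi> > 0")
      case True
      have "(SUP \<eta>. ennreal (cmod (deriv (f_ta t a) (Complex \<xi> \<eta>)))) \<le> ennreal (K * (\<xi>+1) powr e)"
        by (rule SUP_least, rule ennreal_leI) (use deriv_bound[OF t a True] in \<open>simp add: K_def e_def\<close>)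
      thus ?thesis using True by simp
    qed simp
  qed
  also have "\<dots> = ennreal (K * (-1 / (e+1)))"
    by (rule nn_integral_has_integral_lebesgue'[OF _ HI]) (use K0 in simp)
  also have "K * (-1 / (e+1)) = Cc a * (2/a) / t powr (a/2)"
    using a by (simp add: K_def e_def powr_minus field_simps)
  finally show ?thesis .
qed

theorem lemma2p3:
  shows "(\<forall>t::real. \<forall>\<alpha>::real. t > 0 \<longrightarrow> \<alpha> > 0 \<longrightarrow> f_ta t \<alpha> \<in> B_space) \<and>
         (\<forall>\<alpha>::real. \<alpha> > 0 \<longrightarrow> (\<exists>M::real. M > 0 \<and> (\<exists>t0::real. t0 > 0 \<and>
            (\<forall>t. t \<ge> t0 \<longrightarrow> B0_norm (f_ta t \<alpha>) \<le> ennreal (M / t powr (\<alpha> / 2))))))"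
proof (intro conjI allI impI)
  fix t a :: real assume t: "t > 0" and a: "a > 0"
  have "f_ta t a holomorphic_on right_half_plane"
    unfolding holomorphic_on_def field_differentiable_def right_half_plane_def
  proof (intro ballI)
    fix x :: complex assume "x \<in> {z. Re z > 0}"
    hence "Re x > -1" by simp
    from has_field_derivative_at_within[OF f_deriv[OF this, of t a]]
    show "\<exists>f'. (f_ta t a has_field_derivative f') (at x within {z. Re z > 0})" by blast
  qed
  moreover have "B0_norm (f_ta t a) < \<infinity>"
    using B0_bound[OF t a] by (simp add: le_less_trans)
  ultimately show "f_ta t a \<in> B_space" by (simp add: B_space_def)
next
  fix a :: real assume a: "a > 0"
  have "Cc a > 0" unfolding Cc_def using a by (intro add_pos_nonneg) auto
  hence "Cc a * (2/a) > 0" using a by simp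
  thus "\<exists>M>0. \<exists>t0>0. \<forall>t\<ge>t0. B0_norm (f_ta t a) \<le> ennreal (M / t powr (a / 2))"
    using B0_bound a by (intro exI[of _ "Cc a * (2/a)"] conjI exI[of _ 1]) auto
qed

end
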